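(* Let $\mathcal{P}$ be a finite set of atomic propositions, $u \in (2^{\mathcal{P}})^\ast$, $v \in (2^{\mathcal{P}})^+$, $\rho$ a regular expression, $\varphi$ a PSL formula, $m$ the number of states of the minimal deterministic finite automaton over $2^{\mathcal{P}}$ recognizing $L(\rho)$, and $b = m+1$. Then for every $i$ with $0 \le i \le |uv|-1$: $uv^\omega[i,\infty) \models \rho \mapsto \varphi$ if and only if for all $j \in \mathbb{N}$ with $i < j < |u| + b|v|$, $uv^\omega[i,j) \vdash \rho$ implies $uv^\omega[j-1,\infty) \models \varphi$.
   Context: Words: for $\alpha = a_0a_1\ldots$ and $i\le j$, $\alpha[i,j) = a_i\ldots a_{j-1}$ ($\alpha[i,i)=\varepsilon$), $\alpha[i]=a_i$, $\alpha[i,\infty)=a_ia_{i+1}\ldots$; $uv^\omega = uvvv\ldots$. Regular expressions: atomic expressions $\xi ::= p \in \mathcal{P} \mid \lnot \xi \mid \xi \lor \xi$, with $[\![p]\!] = \{A \subseteq \mathcal{P} : p \in A\}$, $[\![\lnot\xi]\!] = 2^{\mathcal{P}} \setminus [\![\xi]\!]$, $[\![\xi_1 \lor \xi_2]\!] = [\![\xi_1]\!] \cup [\![\xi_2]\!]$. Regular expressions $\rho ::= \varepsilon \mid \xi \mid \rho + \rho \mid \rho \circ \rho \mid \rho^\ast$. Matching on infixes of a word $w$: $w[i,j) \vdash \varepsilon$ iff $j=i$; $w[i,j) \vdash \xi$ iff $j=i+1$ and $w[i] \in [\![\xi]\!]$; $w[i,j)\vdash \rho_1+\rho_2$ iff $w[i,j)\vdash\rho_1$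 or $w[i,j)\vdash\rho_2$; $w[i,j)\vdash \rho_1\circ\rho_2$ iff there is $k\in\{i,\ldots,j\}$ with $w[i,k)\vdash\rho_1$ and $w[k,j)\vdash\rho_2$; $w[i,j)\vdash\rho^\ast$ iff $j=i$ or there is $k\in\{i+1,\ldots,j\}$ with $w[i,k)\vdash\rho$ and $w[k,j)\vdash\rho^\ast$. $L(\rho)=\{w\in(2^{\mathcal{P}})^\ast : w[0,|w|)\vdash\rho\}$. PSL formulas: $\varphi ::= p\in\mathcal{P} \mid \lnot\varphi \mid \varphi\lor\varphi \mid \mathbf{X}\varphi \mid \varphi\,\mathbf{U}\,\varphi \mid \rho\mapsto\varphi$, evaluated on $\alpha\in(2^{\mathcal{P}})^\omega$: $\alpha\models p$ iff $p\in\alpha[0]$; $\alpha\models\lnot\varphi$ iff not $\alpha\models\varphi$; $\alpha\models\varphi_1\lor\varphi_2$ iff $\alpha\models\varphi_1$ or $\alpha\models\varphi_2$; $\alpha\models\mathbf{X}\varphi$ iff $\alpha[1,\infty)\models\varphi$; $\alpha\models\varphi_1\mathbf{U}\varphi_2$ iff there is $j$ with $\alpha[j,\infty)\models\varphi_2$ and $\alpha[i,\infty)\models\varphi_1$ for all $i<j$; $\alpha\models\rho\mapsto\varphi$ iff for all $i\in\mathbb{N}\setminus\{0\}$, $\alpha[0,i)\vdash\rho$ implies $\alpha[i-1,\infty)\models\varphi$. *)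

theory Defs
  imports Main
begin

(* The finite set of atomic propositions P is modelled as the universe of a
   finite type 'a; letters of the alphabet 2^P are values of type 'a set. *)

datatype 'a atomic = AProp 'a | ANot "'a atomic" | AOr "'a atomic" "'a atomic"

fun atom_sem :: "'a atomic \<Rightarrow> 'a set set" where
  "atom_sem (AProp p) = {A. p \<in> A}"
| "atom_sem (ANot x) = UNIV - atom_sem x"
| "atom_sem (AOr x y) = atom_sem x \<union> atom_sem y"

datatype 'a rexp = Eps | Atom "'a atomic" | Plus "'a rexp" "'a rexp"
  | Conc "'a rexp" "'a rexp" | Star "'a rexp"

(* w[i,j) |- rho, for a word given as a function of positions *)
inductive rmatch :: "(nat \<Rightarrow> 'a set) \<Rightarrow> nat \<Rightarrow> nat \<Rightarrow> 'a rexp \<Rightarrow> bool" where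
  m_eps: "rmatch w i i Eps"
| m_atom: "w i \<in> atom_sem \<xi> \<Longrightarrow> rmatch w i (Suc i) (Atom \<xi>)"
| m_plus1: "rmatch w i j r1 \<Longrightarrow> rmatch w i j (Plus r1 r2)"
| m_plus2: "rmatch w i j r2 \<Longrightarrow> rmatch w i j (Plus r1 r2)"
| m_conc: "\<lbrakk>i \<le> k; k \<le> j; rmatch w i k r1; rmatch w k j r2\<rbrakk> \<Longrightarrow> rmatch w i j (Conc r1 r2)"
| m_star0: "rmatch w i i (Star r)"
| m_star: "\<lbrakk>i < k; k \<le> j; rmatch w i k r; rmatch w k j (Star r)\<rbrakk> \<Longrightarrow> rmatch w i j (Star r)"

definition lang :: "'a rexp \<Rightarrow> 'a set list set" where
  "lang r = {w. rmatch (\<lambda>i. w ! i) 0 (length w) r}"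

datatype 'a psl = PProp 'a | PNot "'a psl" | POr "'a psl" "'a psl" | PX "'a psl"
  | PU "'a psl" "'a psl" | PTrig "'a rexp" "'a psl"

definition suffix :: "(nat \<Rightarrow> 'a set) \<Rightarrow> nat \<Rightarrow> (nat \<Rightarrow> 'a set)" where
  "suffix \<alpha> i = (\<lambda>k. \<alpha> (i + k))"

fun sat :: "(nat \<Rightarrow> 'a set) \<Rightarrow> 'a psl \<Rightarrow> bool" where
  "sat \<alpha> (PProp p) = (p \<in> \<alpha> 0)"
| "sat \<alpha> (PNot f) = (\<not> sat \<alpha> f)"
| "sat \<alpha> (POr f g) = (sat \<alpha> f \<or> sat \<alpha> g)"
| "sat \<alpha> (PX f) = sat (suffix \<alpha> 1) f"
| "sat \<alpha> (PU f g) = (\<exists>j. sat (suffix \<alpha> j) g \<and> (\<forall>i<j. sat (suffix \<alpha> i) f))"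
| "sat \<alpha> (PTrig r f) = (\<forall>i>0. rmatch \<alpha> 0 i r \<longrightarrow> sat (suffix \<alpha> (i - 1)) f)"

definition lasso :: "'a list \<Rightarrow> 'a list \<Rightarrow> nat \<Rightarrow> 'a" where
  "lasso u v i = (if i < length u then u ! i else v ! ((i - length u) mod length v))"

(* DFA with state set {0..<n}, alphabet 'b (all letters) *)
definition dfa_accepts :: "(nat \<Rightarrow> 'b \<Rightarrow> nat) \<Rightarrow> nat \<Rightarrow> nat set \<Rightarrow> 'b list \<Rightarrow> bool" where
  "dfa_accepts \<delta> q0 F w = (foldl \<delta> q0 w \<in> F)"

definition is_dfa :: "nat \<Rightarrow> (nat \<Rightarrow> 'b \<Rightarrow> nat) \<Rightarrow> nat \<Rightarrow> nat set \<Rightarrow> bool" where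
  "is_dfa n \<delta> q0 F = (q0 < n \<and> F \<subseteq> {..<n} \<and> (\<forall>q<n. \<forall>a. \<delta> q a < n))"

definition min_dfa_states :: "'b list set \<Rightarrow> nat" where
  "min_dfa_states L = (LEAST n. \<exists>\<delta> q0 F. is_dfa n \<delta> q0 F \<and> {w. dfa_accepts \<delta> q0 F w} = L)"

end

theory Submission
  imports Defs
begin

inductive_set lstar :: "'b list set \<Rightarrow> 'b list set" for A where
  lstar_nil: "[] \<in> lstar A"
| lstar_cons: "\<lbrakk>x \<in> A; x \<noteq> []; y \<in> lstar A\<rbrakk> \<Longrightarrow> x @ y \<in> lstar A"

definition conc :: "'b list set \<Rightarrow> 'b list set \<Rightarrow> 'b list set" where
  "conc A B = {xs @ ys | xs ys. xs \<in> A \<and> ys \<in> B}"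

fun Lr :: "'a rexp \<Rightarrow> 'a set list set" where
  "Lr Eps = {[]}"
| "Lr (Atom x) = {[a] | a. a \<in> atom_sem x}"
| "Lr (Plus r s) = Lr r \<union> Lr s"
| "Lr (Conc r s) = conc (Lr r) (Lr s)"
| "Lr (Star r) = lstar (Lr r)"

lemma upt_split: "i \<le> k \<Longrightarrow> k \<le> j \<Longrightarrow> [i..<j] = [i..<k] @ [k..<j]"
  by (metis le_add_diff_inverse upt_add_eq_append)

lemma rmatch_Lr1: "rmatch w i j r \<Longrightarrow> i \<le> j \<and> map w [i..<j] \<in> Lr r"
proof (induction rule: rmatch.induct)
  case (m_conc i k j w r1 r2)
  then show ?case by (auto simp: conc_def upt_split[of i k j])
next
  case (m_star i k j w r)
  have e: "map w [i..<j] = map w [i..<k] @ map w [k..<j]" using m_star by (simp add: upt_split[of i k j])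
  have "map w [i..<k] \<noteq> []" using m_star by simp
  then have "map w [i..<k] @ map w [k..<j] \<in> lstar (Lr r)"
    using m_star by (intro lstar_cons) auto
  then show ?case using e m_star by simp
qed (auto intro: lstar_nil)

lemma map_upt_append: "i \<le> j \<Longrightarrow> map w [i..<j] = xs @ ys \<Longrightarrow>
  \<exists>k. i \<le> k \<and> k \<le> j \<and> xs = map w [i..<k] \<and> ys = map w [k..<j]"
proof -
  assume ij: "i \<le> j" and h: "map w [i..<j] = xs @ ys"
  define k where "k = i + length xs"
  have len: "j - i = length xs + length ys" using arg_cong[OF h, of length] by simp
  then have "i \<le> k" "k \<le> j" unfolding k_def using ij by auto
  then have "map w [i..<j] = map w [i..<k] @ map w [k..<j]" by (simp add: upt_split[of i k j])
  moreover have "length (map w [i..<k]) = length xs" unfolding k_def by simp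
  ultimately have "xs = map w [i..<k] \<and> ys = map w [k..<j]" using h append_eq_append_conv by metis
  then show ?thesis using \<open>i \<le> k\<close> \<open>k \<le> j\<close> by blast
qed

lemma rmatch_Lr2: "i \<le> j \<Longrightarrow> map w [i..<j] \<in> Lr r \<Longrightarrow> rmatch w i j r"
proof (induction r arbitrary: i j)
  case Eps
  then show ?case by (auto intro: rmatch.intros)
next
  case (Atom x)
  then obtain a where a: "map w [i..<j] = [a]" "a \<in> atom_sem x" by auto
  then have "j = Suc i" using Atom(1) proof -
    have "length (map w [i..<j]) = 1" using a by simp
    then show ?thesis using Atom(1) by simp
  qed
  with a show ?case by (auto intro: rmatch.intros)
next
  case (Plus r1 r2)
  then show ?case by (auto intro: rmatch.intros)
next
  case (Conc r1 r2)
  then obtain xs ys where "map w [i..<j] = xs @ ys" "xs \<in> Lr r1" "ys \<in> Lr r2" by (auto simp: conc_def)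
  then show ?case using Conc by (metis map_upt_append rmatch.m_conc)
next
  case (Star r)
  have "xs \<in> lstar (Lr r) \<Longrightarrow> \<forall>i. i \<le> j \<longrightarrow> map w [i..<j] = xs \<longrightarrow> rmatch w i j (Star r)" for xs
  proof (induction rule: lstar.induct)
    case lstar_nil
    then show ?case by (auto intro: rmatch.intros)
  next
    case (lstar_cons x y)
    show ?case
    proof (intro allI impI)
      fix i assume "i \<le> j" "map w [i..<j] = x @ y"
      then obtain k where k: "i \<le> k" "k \<le> j" "x = map w [i..<k]" "y = map w [k..<j]"
        using map_upt_append \<open>i \<le> j\<close> by metis
      then have "i < k" using lstar_cons(2) by (metis le_neq_implies_less list.simps(8) upt_rec)
      have r1: "rmatch w i k r" using Star.IH k lstar_cons(1) by simp
      have r2: "rmatch w k j (Star r)" using lstar_cons(4) k by simp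
      show "rmatch w i j (Star r)" using rmatch.m_star[OF \<open>i < k\<close> \<open>k \<le> j\<close> r1 r2] .
    qed
  qed
  then show ?case using Star by auto
qed

lemma rmatch_iff: "rmatch w i j r \<longleftrightarrow> i \<le> j \<and> map w [i..<j] \<in> Lr r"
  using rmatch_Lr1 rmatch_Lr2 by blast

lemma lang_Lr: "lang r = Lr r"
  unfolding lang_def rmatch_iff by (simp add: map_nth)

definition quot :: "'b list \<Rightarrow> 'b list set \<Rightarrow> 'b list set" where
  "quot x L = {y. x @ y \<in> L}"

definition Qs :: "'b list set \<Rightarrow> 'b list set set" where
  "Qs L = range (\<lambda>x. quot x L)"

lemma lstar_append: "x \<in> lstar A \<Longrightarrow> y \<in> lstar A \<Longrightarrow> x @ y \<in> lstar A"
  by (induction rule: lstar.induct) (auto intro: lstar.intros)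

lemma lstar_decomp: "z \<in> lstar A \<Longrightarrow> \<forall>x w. z = x @ w \<longrightarrow> x \<noteq> [] \<longrightarrow>
   (\<exists>y s. x = y @ s \<and> s \<noteq> [] \<and> y \<in> lstar A \<and> w \<in> conc (quot s A) (lstar A))"
proof (induction rule: lstar.induct)
  case lstar_nil
  then show ?case by auto
next
  case (lstar_cons p t)
  show ?case
  proof (intro allI impI)
    fix x w assume h: "p @ t = x @ w" "x \<noteq> []"
    then obtain us where "(x = p @ us \<and> us @ w = t) \<or> (x @ us = p \<and> w = us @ t)"
      by (metis append_eq_append_conv2)
    then show "\<exists>y s. x = y @ s \<and> s \<noteq> [] \<and> y \<in> lstar A \<and> w \<in> conc (quot s A) (lstar A)"
    proof
      assume a: "x = p @ us \<and> us @ w = t"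
      show ?thesis
      proof (cases "us = []")
        case True
        then have "x = [] @ p" "w = [] @ t" using a by auto
        moreover have "[] \<in> quot p A" using lstar_cons(1) by (simp add: quot_def)
        ultimately show ?thesis using lstar_cons(2,3) lstar_nil unfolding conc_def by blast
      next
        case False
        then obtain y s where ys: "us = y @ s" "s \<noteq> []" "y \<in> lstar A" "w \<in> conc (quot s A) (lstar A)"
          using lstar_cons.IH a by blast
        have "p @ y \<in> lstar A" using lstar.lstar_cons[OF lstar_cons(1,2) ys(3)] .
        moreover have "x = (p @ y) @ s" using a ys by simp
        ultimately show ?thesis using ys by blast
      qed
    next
      assume a: "x @ us = p \<and> w = us @ t"
      then have "us \<in> quot x A" using lstar_cons(1) by (simp add: quot_def)
      then have "w \<in> conc (quot x A) (lstar A)" using a lstar_cons(3) unfolding conc_def by blast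
      moreover have "x = [] @ x" by simp
      ultimately show ?thesis using h(2) lstar_nil by blast
    qed
  qed
qed

lemma quot_nil[simp]: "quot [] L = L" by (simp add: quot_def)

lemma quot_star: "x \<noteq> [] \<Longrightarrow> quot x (lstar A) =
   \<Union> ((\<lambda>S. conc S (lstar A)) ` {quot s A | s. \<exists>y. x = y @ s \<and> s \<noteq> [] \<and> y \<in> lstar A})"
proof
  assume "x \<noteq> []"
  show "quot x (lstar A) \<subseteq> \<Union> ((\<lambda>S. conc S (lstar A)) ` {quot s A | s. \<exists>y. x = y @ s \<and> s \<noteq> [] \<and> y \<in> lstar A})"
  proof
    fix w assume "w \<in> quot x (lstar A)"
    then have "x @ w \<in> lstar A" by (simp add: quot_def)
    then obtain y s where "x = y @ s \<and> s \<noteq> [] \<and> y \<in> lstar A \<and> w \<in> conc (quot s A) (lstar A)"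
      using lstar_decomp \<open>x \<noteq> []\<close> by blast
    then show "w \<in> \<Union> ((\<lambda>S. conc S (lstar A)) ` {quot s A | s. \<exists>y. x = y @ s \<and> s \<noteq> [] \<and> y \<in> lstar A})"
      by blast
  qed
next
  show "\<Union> ((\<lambda>S. conc S (lstar A)) ` {quot s A | s. \<exists>y. x = y @ s \<and> s \<noteq> [] \<and> y \<in> lstar A}) \<subseteq> quot x (lstar A)"
  proof
    fix w assume "w \<in> \<Union> ((\<lambda>S. conc S (lstar A)) ` {quot s A | s. \<exists>y. x = y @ s \<and> s \<noteq> [] \<and> y \<in> lstar A})"
    then obtain s y p t where h: "x = y @ s" "s \<noteq> []" "y \<in> lstar A" "w = p @ t" "s @ p \<in> A" "t \<in> lstar A"
      by (auto simp: conc_def quot_def)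
    then have "(s @ p) @ t \<in> lstar A" using lstar_cons[of "s @ p" A t] by simp
    then have "y @ (s @ p) @ t \<in> lstar A" using h lstar_append by blast
    then show "w \<in> quot x (lstar A)" using h by (simp add: quot_def)
  qed
qed

lemma quot_conc: "quot x (conc A B) = conc (quot x A) B \<union> \<Union> {quot z B | z. \<exists>y. x = y @ z \<and> y \<in> A}"
proof (intro set_eqI iffI)
  fix w assume "w \<in> quot x (conc A B)"
  then obtain p q where h: "x @ w = p @ q" "p \<in> A" "q \<in> B" by (auto simp: quot_def conc_def)
  then obtain us where "(x = p @ us \<and> us @ w = q) \<or> (x @ us = p \<and> w = us @ q)"
    by (metis append_eq_append_conv2)
  then show "w \<in> conc (quot x A) B \<union> \<Union> {quot z B | z. \<exists>y. x = y @ z \<and> y \<in> A}"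
  proof
    assume a: "x = p @ us \<and> us @ w = q"
    then have "w \<in> quot us B" "quot us B \<in> {quot z B | z. \<exists>y. x = y @ z \<and> y \<in> A}"
      using h by (auto simp: quot_def)
    then show ?thesis by blast
  next
    assume a: "x @ us = p \<and> w = us @ q"
    then show ?thesis using h by (auto simp: quot_def conc_def)
  qed
next
  fix w assume "w \<in> conc (quot x A) B \<union> \<Union> {quot z B | z. \<exists>y. x = y @ z \<and> y \<in> A}"
  then show "w \<in> quot x (conc A B)"
    by (auto simp: quot_def conc_def) (metis append.assoc)+
qed

lemma fin_Qs: "finite (Qs (Lr r))"
proof (induction r)
  case Eps
  have "Qs {[]} \<subseteq> {{[]}, {}}"
    by (auto simp: Qs_def quot_def)
  then show ?case by (metis Lr.simps(1) finite.emptyI finite.insertI finite_subset)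
next
  case (Atom x)
  let ?L = "{[a] | a. a \<in> atom_sem x}"
  have "quot y ?L \<in> {?L, {[]}, {}}" for y
  proof (cases y)
    case (Cons a y')
    then show ?thesis by (cases y') (auto simp: quot_def)
  next
    case Nil then show ?thesis by simp
  qed
  then have "Qs ?L \<subseteq> {?L, {[]}, {}}" by (auto simp: Qs_def)
  then show ?case by (simp add: finite_subset)
next
  case (Plus r1 r2)
  have "Qs (Lr r1 \<union> Lr r2) \<subseteq> (\<lambda>(S, T). S \<union> T) ` (Qs (Lr r1) \<times> Qs (Lr r2))"
  proof
    fix X assume "X \<in> Qs (Lr r1 \<union> Lr r2)"
    then obtain x where "X = quot x (Lr r1 \<union> Lr r2)" by (auto simp: Qs_def)
    then have "X = (\<lambda>(S, T). S \<union> T) (quot x (Lr r1), quot x (Lr r2))" by (auto simp: quot_def)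
    moreover have "(quot x (Lr r1), quot x (Lr r2)) \<in> Qs (Lr r1) \<times> Qs (Lr r2)" by (simp add: Qs_def)
    ultimately show "X \<in> (\<lambda>(S, T). S \<union> T) ` (Qs (Lr r1) \<times> Qs (Lr r2))" by blast
  qed
  then show ?case using Plus by (simp add: finite_subset)
next
  case (Conc r1 r2)
  let ?A = "Lr r1" and ?B = "Lr r2"
  have "Qs (conc ?A ?B) \<subseteq> (\<lambda>(S, U). conc S ?B \<union> \<Union> U) ` (Qs ?A \<times> Pow (Qs ?B))"
  proof
    fix X assume "X \<in> Qs (conc ?A ?B)"
    then obtain x where "X = quot x (conc ?A ?B)" by (auto simp: Qs_def)
    then have "X = (\<lambda>(S, U). conc S ?B \<union> \<Union> U) (quot x ?A, {quot z ?B | z. \<exists>y. x = y @ z \<and> y \<in> ?A})"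
      by (simp add: quot_conc)
    moreover have "(quot x ?A, {quot z ?B | z. \<exists>y. x = y @ z \<and> y \<in> ?A}) \<in> Qs ?A \<times> Pow (Qs ?B)"
      by (auto simp: Qs_def)
    ultimately show "X \<in> (\<lambda>(S, U). conc S ?B \<union> \<Union> U) ` (Qs ?A \<times> Pow (Qs ?B))" by blast
  qed
  then show ?case using Conc by (simp add: finite_subset)
next
  case (Star r)
  let ?A = "Lr r"
  have "Qs (lstar ?A) \<subseteq> insert (lstar ?A) ((\<lambda>U. \<Union> ((\<lambda>S. conc S (lstar ?A)) ` U)) ` Pow (Qs ?A))"
  proof
    fix X assume "X \<in> Qs (lstar ?A)"
    then obtain x where x: "X = quot x (lstar ?A)" by (auto simp: Qs_def)
    show "X \<in> insert (lstar ?A) ((\<lambda>U. \<Union> ((\<lambda>S. conc S (lstar ?A)) ` U)) ` Pow (Qs ?A))"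
    proof (cases "x = []")
      case True then show ?thesis using x by simp
    next
      case False
      then have "X = (\<lambda>U. \<Union> ((\<lambda>S. conc S (lstar ?A)) ` U)) {quot s ?A | s. \<exists>y. x = y @ s \<and> s \<noteq> [] \<and> y \<in> lstar ?A}"
        using x quot_star by simp
      moreover have "{quot s ?A | s. \<exists>y. x = y @ s \<and> s \<noteq> [] \<and> y \<in> lstar ?A} \<in> Pow (Qs ?A)"
        unfolding Qs_def by blast
      ultimately show ?thesis by blast
    qed
  qed
  then show ?case using Star by (simp add: finite_subset)
qed

lemma quot_snoc: "quot [a] (quot x L) = quot (x @ [a]) L"
  by (simp add: quot_def)

lemma dfa_exists:
  assumes "finite (Qs L)"
  shows "\<exists>n \<delta> q0 F. is_dfa n \<delta> q0 F \<and> {w. dfa_accepts \<delta> q0 F w} = L"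
proof -
  obtain h where h: "bij_betw h (Qs L) {0..<card (Qs L)}"
    using ex_bij_betw_finite_nat[OF assms] by blast
  define n where "n = card (Qs L)"
  define g where "g = inv_into (Qs L) h"
  define \<delta> where "\<delta> = (\<lambda>q a. if q < n then h (quot [a] (g q)) else 0)"
  define F where "F = h ` {S \<in> Qs L. [] \<in> S}"
  have inQ: "quot x L \<in> Qs L" for x by (simp add: Qs_def)
  have hlt: "S \<in> Qs L \<Longrightarrow> h S < n" for S using h unfolding n_def bij_betw_def by auto
  have gh: "S \<in> Qs L \<Longrightarrow> g (h S) = S" for S using h unfolding g_def bij_betw_def by auto
  have run: "foldl \<delta> (h L) w = h (quot w L)" for w
  proof (induction w rule: rev_induct)
    case Nil then show ?case by simp
  next
    case (snoc a w)
    then show ?case using hlt[OF inQ] gh[OF inQ] by (simp add: \<delta>_def quot_snoc)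
  qed
  have LQ: "L \<in> Qs L" using inQ[of "[]"] by simp
  have dfa: "is_dfa n \<delta> (h L) F"
    unfolding is_dfa_def
  proof (intro conjI allI impI)
    show "h L < n" using hlt[OF LQ] .
    show "F \<subseteq> {..<n}" using hlt by (auto simp: F_def)
    fix q a assume "q < n"
    then have "q \<in> h ` Qs L" using h unfolding n_def bij_betw_def by auto
    then have "g q \<in> Qs L" unfolding g_def by (simp add: inv_into_into)
    then obtain x where "g q = quot x L" by (auto simp: Qs_def)
    then show "\<delta> q a < n" using \<open>q < n\<close> hlt[OF inQ] by (simp add: \<delta>_def quot_snoc)
  qed
  have "dfa_accepts \<delta> (h L) F w \<longleftrightarrow> w \<in> L" for w
  proof -
    have inj: "inj_on h (Qs L)" using h bij_betw_def by blast
    have "dfa_accepts \<delta> (h L) F w \<longleftrightarrow> h (quot w L) \<in> h ` {S \<in> Qs L. [] \<in> S}"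
      by (simp add: dfa_accepts_def run F_def)
    also have "\<dots> \<longleftrightarrow> [] \<in> quot w L"
      using inj inQ by (auto simp: inj_on_def)
    also have "\<dots> \<longleftrightarrow> w \<in> L" by (simp add: quot_def)
    finally show ?thesis .
  qed
  then show ?thesis using dfa by blast
qed

lemma foldl_lt: "is_dfa m \<delta> q0 F \<Longrightarrow> q < m \<Longrightarrow> foldl \<delta> q xs < m"
  by (induction xs arbitrary: q) (auto simp: is_dfa_def)

lemma lasso_period:
  assumes "v \<noteq> []" "length u \<le> k"
  shows "lasso u v (k + c * length v) = lasso u v k"
proof -
  have "k + c * length v - length u = (k - length u) + c * length v" using assms by simp
  then have "(k + c * length v - length u) mod length v = (k - length u) mod length v" by simp
  then show ?thesis using assms unfolding lasso_def by simp
qed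

lemma map_upt_shift: "map f [a + d..<b + d] = map (\<lambda>k. f (k + d)) [a..<b]"
proof (induction b)
  case 0 then show ?case by simp
next
  case (Suc b)
  then show ?case by (cases "a \<le> b") auto
qed

lemma map_suffix: "map (suffix w i) [0..<k] = map w [i..<i + k]"
  using map_upt_shift[of w 0 i k] by (simp add: suffix_def add.commute)

theorem lemma3:
  fixes u v :: "('a::finite) set list" and \<rho> :: "'a rexp" and \<phi> :: "'a psl"
    and m b i :: nat
  assumes "v \<noteq> []"
    and "m = min_dfa_states (lang \<rho>)"
    and "b = m + 1"
    and "i \<le> length (u @ v) - 1"
  shows "sat (suffix (lasso u v) i) (PTrig \<rho> \<phi>) \<longleftrightarrow>
    (\<forall>j. i < j \<and> j < length u + b * length v \<longrightarrow>
       rmatch (lasso u v) i j \<rho> \<longrightarrow> sat (suffix (lasso u v) (j - 1)) \<phi>)"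
proof -
  let ?\<alpha> = "lasso u v" and ?n = "length v" and ?L = "lang \<rho>"
  have npos: "?n > 0" using assms(1) by simp
  have ilt: "i < length u + ?n" using assms(4) npos by (metis add_gr_0 diff_less le_less_trans length_append zero_less_one)
  have ex: "\<exists>n \<delta> q0 F. is_dfa n \<delta> q0 F \<and> {w. dfa_accepts \<delta> q0 F w} = ?L"
    using dfa_exists fin_Qs lang_Lr by metis
  have "\<exists>\<delta> q0 F. is_dfa m \<delta> q0 F \<and> {w. dfa_accepts \<delta> q0 F w} = ?L"
    unfolding assms(2) min_dfa_states_def by (rule LeastI_ex[OF ex])
  then obtain \<delta> q0 F where dfa: "is_dfa m \<delta> q0 F" and acc: "{w. dfa_accepts \<delta> q0 F w} = ?L"
    by blast
  have q0: "q0 < m" using dfa by (simp add: is_dfa_def)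
  have racc: "rmatch ?\<alpha> i k \<rho> \<longleftrightarrow> i \<le> k \<and> foldl \<delta> q0 (map ?\<alpha> [i..<k]) \<in> F" for k
  proof -
    have "map ?\<alpha> [i..<k] \<in> ?L \<longleftrightarrow> foldl \<delta> q0 (map ?\<alpha> [i..<k]) \<in> F"
      using acc by (auto simp: dfa_accepts_def)
    then show ?thesis using lang_Lr rmatch_iff by metis
  qed
  have per: "length u \<le> k \<Longrightarrow> ?\<alpha> (k + c * ?n) = ?\<alpha> k" for k c
    using lasso_period[OF assms(1)] by blast
  let ?B = "length u + b * ?n"
  have pump: "rmatch ?\<alpha> i j \<rho> \<longrightarrow> length u + ?n \<le> j \<longrightarrow>
     (\<exists>j' c. rmatch ?\<alpha> i j' \<rho> \<and> length u + ?n \<le> j' \<and> j' < ?B \<and> j = j' + c * ?n)" for j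
  proof (induction j rule: less_induct)
    case (less j)
    show ?case
    proof (intro impI)
      assume mj: "rmatch ?\<alpha> i j \<rho>" and jge: "length u + ?n \<le> j"
      show "\<exists>j' c. rmatch ?\<alpha> i j' \<rho> \<and> length u + ?n \<le> j' \<and> j' < ?B \<and> j = j' + c * ?n"
      proof (cases "j < ?B")
        case True
        then show ?thesis using mj jge by (intro exI[of _ j] exI[of _ 0]) auto
      next
        case False
        define P where "P t = length u + ?n + t * ?n" for t
        define st where "st t = foldl \<delta> q0 (map ?\<alpha> [i..<P t])" for t
        have "st ` {0..m} \<subseteq> {..<m}" using foldl_lt[OF dfa q0] by (auto simp: st_def)
        then have "\<not> inj_on st {0..m}"
          by (metis card_atLeastAtMost card_inj_on_le card_lessThan finite_lessThan diff_zero
              Suc_n_not_le_n)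
        then obtain t1 t2 where t: "t1 \<in> {0..m}" "t2 \<in> {0..m}" "t1 < t2" "st t1 = st t2"
          unfolding inj_on_def by (metis linorder_neqE_nat)
        define d where "d = (t2 - t1) * ?n"
        have dpos: "d > 0" using t npos by (simp add: d_def)
        have P2: "P t2 = P t1 + d" using t by (simp add: P_def d_def algebra_simps)
        have "P t2 \<le> P m" using t by (simp add: P_def)
        also have "P m = ?B" using assms(3) by (simp add: P_def algebra_simps)
        finally have P2j: "P t2 \<le> j" using False by simp
        define j' where "j' = j - d"
        have jj: "j = j' + d" using P2 P2j by (simp add: j'_def)
        have P1j: "P t1 \<le> j'" using P2 P2j jj by simp
        have iP: "i \<le> P t1" using ilt by (simp add: P_def)
        have iP2: "i \<le> P t2" using iP P2 by simp
        have seg: "map ?\<alpha> [P t1..<j'] = map ?\<alpha> [P t2..<j]"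
        proof -
          have "map ?\<alpha> [P t2..<j] = map (\<lambda>k. ?\<alpha> (k + d)) [P t1..<j']"
            using map_upt_shift[of ?\<alpha> "P t1" d j'] P2 jj by simp
          also have "\<dots> = map ?\<alpha> [P t1..<j']"
          proof (rule map_cong[OF refl])
            fix k assume "k \<in> set [P t1..<j']"
            then have "length u \<le> k" by (simp add: P_def)
            then show "?\<alpha> (k + d) = ?\<alpha> k" using per[of k "t2 - t1"] by (simp add: d_def)
          qed
          finally show ?thesis by simp
        qed
        have "foldl \<delta> q0 (map ?\<alpha> [i..<j]) = foldl \<delta> (st t2) (map ?\<alpha> [P t2..<j])"
          using upt_split[OF iP2 P2j] by (simp add: st_def)
        also have "\<dots> = foldl \<delta> (st t1) (map ?\<alpha> [P t1..<j'])" using t seg by simp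
        also have "\<dots> = foldl \<delta> q0 (map ?\<alpha> [i..<j'])"
          using upt_split[OF iP P1j] by (simp add: st_def)
        finally have "rmatch ?\<alpha> i j' \<rho>" using mj racc iP P1j by auto
        moreover have "length u + ?n \<le> j'" using P1j by (simp add: P_def)
        moreover have "j' < j" using jj dpos by simp
        ultimately obtain j'' c where "rmatch ?\<alpha> i j'' \<rho> \<and> length u + ?n \<le> j'' \<and> j'' < ?B \<and> j' = j'' + c * ?n"
          using less.IH by blast
        then show ?thesis using jj unfolding d_def
          by (intro exI[of _ j''] exI[of _ "c + (t2 - t1)"]) (simp add: algebra_simps)
      qed
    qed
  qed
  have shift: "rmatch (suffix ?\<alpha> i) 0 k \<rho> \<longleftrightarrow> rmatch ?\<alpha> i (i + k) \<rho>" for k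
    using rmatch_iff map_suffix by (metis le_add1 le0)
  have suf: "suffix (suffix ?\<alpha> i) k = suffix ?\<alpha> (i + k)" for k
    by (simp add: suffix_def add.assoc)
  have lhs: "sat (suffix ?\<alpha> i) (PTrig \<rho> \<phi>) \<longleftrightarrow>
     (\<forall>j>i. rmatch ?\<alpha> i j \<rho> \<longrightarrow> sat (suffix ?\<alpha> (j - 1)) \<phi>)"
  proof
    assume h: "sat (suffix ?\<alpha> i) (PTrig \<rho> \<phi>)"
    show "\<forall>j>i. rmatch ?\<alpha> i j \<rho> \<longrightarrow> sat (suffix ?\<alpha> (j - 1)) \<phi>"
    proof (intro allI impI)
      fix j assume "i < j" "rmatch ?\<alpha> i j \<rho>"
      then have k: "0 < j - i" "rmatch (suffix ?\<alpha> i) 0 (j - i) \<rho>" using shift[of "j - i"] by auto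
      have "\<forall>k>0. rmatch (suffix ?\<alpha> i) 0 k \<rho> \<longrightarrow> sat (suffix (suffix ?\<alpha> i) (k - 1)) \<phi>"
        using h by (simp only: sat.simps)
      then have "sat (suffix (suffix ?\<alpha> i) (j - i - 1)) \<phi>" using k by blast
      moreover have "i + (j - i - 1) = j - 1" using \<open>i < j\<close> by simp
      ultimately show "sat (suffix ?\<alpha> (j - 1)) \<phi>" using suf[of "j - i - 1"] by simp
    qed
  next
    assume h: "\<forall>j>i. rmatch ?\<alpha> i j \<rho> \<longrightarrow> sat (suffix ?\<alpha> (j - 1)) \<phi>"
    show "sat (suffix ?\<alpha> i) (PTrig \<rho> \<phi>)"
    proof (simp only: sat.simps, intro allI impI)
      fix k :: nat assume "0 < k" "rmatch (suffix ?\<alpha> i) 0 k \<rho>"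
      then show "sat (suffix (suffix ?\<alpha> i) (k - 1)) \<phi>" using h shift[of k] suf[of "k - 1"] by simp
    qed
  qed
  show ?thesis unfolding lhs
  proof
    assume "\<forall>j>i. rmatch ?\<alpha> i j \<rho> \<longrightarrow> sat (suffix ?\<alpha> (j - 1)) \<phi>"
    then show "\<forall>j. i < j \<and> j < ?B \<longrightarrow> rmatch ?\<alpha> i j \<rho> \<longrightarrow> sat (suffix ?\<alpha> (j - 1)) \<phi>" by blast
  next
    assume h: "\<forall>j. i < j \<and> j < ?B \<longrightarrow> rmatch ?\<alpha> i j \<rho> \<longrightarrow> sat (suffix ?\<alpha> (j - 1)) \<phi>"
    show "\<forall>j>i. rmatch ?\<alpha> i j \<rho> \<longrightarrow> sat (suffix ?\<alpha> (j - 1)) \<phi>"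
    proof (intro allI impI)
      fix j assume ij: "i < j" and mj: "rmatch ?\<alpha> i j \<rho>"
      show "sat (suffix ?\<alpha> (j - 1)) \<phi>"
      proof (cases "j < ?B")
        case True then show ?thesis using h ij mj by blast
      next
        case False
        then have "length u + ?n \<le> j" using assms(3) by (simp add: algebra_simps)
        then obtain j' c where j': "rmatch ?\<alpha> i j' \<rho>" "length u + ?n \<le> j'" "j' < ?B" "j = j' + c * ?n"
          using pump mj by blast
        have "sat (suffix ?\<alpha> (j' - 1)) \<phi>" using h j' ilt by simp
        moreover have "suffix ?\<alpha> (j - 1) = suffix ?\<alpha> (j' - 1)"
        proof
          fix x
          have "1 \<le> j'" using j'(2) npos by linarith
          then have "j - 1 + x = (j' - 1 + x) + c * ?n" using j'(4) by linarith
          moreover have "length u \<le> j' - 1 + x" using j'(2) npos by linarith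
          ultimately show "suffix ?\<alpha> (j - 1) x = suffix ?\<alpha> (j' - 1) x"
            unfolding suffix_def using per by metis
        qed
        ultimately show ?thesis by simp
      qed
    qed
  qed
qed

end
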